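(* The function $k_p$ is a closure operator on $\mathcal{L}$, i.e. for all $\ell, \jmath \in \mathcal{L}$: (1) $\ell \sqsubseteq k_p(\ell)$; (2) $\ell \sqsubseteq \jmath \implies k_p(\ell) \sqsubseteq k_p(\jmath)$; (3) $k_p(\ell) = k_p(k_p(\ell))$.
   Context: $\mathcal{L}$ is a security lattice (ordered by $\sqsubseteq$) that also has greatest lower bounds (meets) of arbitrary subsets. Programs $p$ are partial functions from $\mathcal{P}(I \times \mathcal{L})$ to $\mathcal{P}(O \times \mathcal{L})$ (sets of labeled inputs to sets of labeled outputs), and for a labeled set $x$, $\mathcal{L}(x) = \{\ell \mid a^\ell \in x\}$ is the set of labels occurring in $x$. For such a program $p$ define $k_p(\ell)$ to be the greatest lower bound (meet) in $\mathcal{L}$ of the set $\{\jmath \mid \exists x.\ \jmath \in \mathcal{L}(p(x)) \wedge \ell \sqsubseteq \jmath\}$, i.e. of all output labels of $p$ that lie above $\ell$ (the meet of the empty set being the top element). *)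

theory Defs
  imports Main
begin

definition labels :: "('a \<times> 'l) set \<Rightarrow> 'l set" where
  "labels x = {l. \<exists>a. (a, l) \<in> x}"

text \<open>Programs are partial functions from labeled input sets to labeled output sets,
  modelled as option-valued functions (None = undefined).
  k_p(l) = meet of all output labels of p lying above l.\<close>
definition kp :: "(('i \<times> 'l::complete_lattice) set \<Rightarrow> ('o \<times> 'l) set option) \<Rightarrow> 'l \<Rightarrow> 'l" where
  "kp p l = Inf {j. \<exists>x y. p x = Some y \<and> j \<in> labels y \<and> l \<le> j}"

end

theory Submission
  imports Defs
begin

lemma kp_alt: "kp p l = Inf {j \<in> {j. \<exists>x y. p x = Some y \<and> j \<in> labels y}. l \<le> j}"
  unfolding kp_def by (rule arg_cong[where f=Inf]) blast

theorem mainTheorem11: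
  fixes p :: "('i \<times> 'l::complete_lattice) set \<Rightarrow> ('o \<times> 'l) set option"
  shows "(\<forall>l. l \<le> kp p l) \<and> (\<forall>l j. l \<le> j \<longrightarrow> kp p l \<le> kp p j) \<and> (\<forall>l. kp p l = kp p (kp p l))"
proof -
  define OL where "OL = {j. \<exists>x y. p x = Some y \<and> j \<in> labels y}"
  have k: "kp p l = Inf {j \<in> OL. l \<le> j}" for l unfolding OL_def by (rule kp_alt)
  have 1: "l \<le> kp p l" for l unfolding k by (rule Inf_greatest) simp
  have 2: "l \<le> j \<Longrightarrow> kp p l \<le> kp p j" for l j unfolding k
    by (rule Inf_superset_mono) auto
  have 3: "kp p l = kp p (kp p l)" for l
  proof -
    have "{j \<in> OL. kp p l \<le> j} = {j \<in> OL. l \<le> j}"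
    proof
      show "{j \<in> OL. kp p l \<le> j} \<subseteq> {j \<in> OL. l \<le> j}" using 1[of l] order_trans by blast
      show "{j \<in> OL. l \<le> j} \<subseteq> {j \<in> OL. kp p l \<le> j}" unfolding k by (auto intro: Inf_lower)
    qed
    then show ?thesis by (metis k)
  qed
  show ?thesis using 1 2 3 by blast
qed

end
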